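(* Let solutions $\psi_n$ of the KG equation concentrate at the trajectory $\hat{\mathbf r}$. Then the adjacent ergocenters $\mathbf r_n(t)$ of the solutions converge to $\hat{\mathbf r}(t)$ uniformly on $[T_-,T_+]$.
   Context: Fix constants $c>0$, $m>0$ and a real charge $q$. For parameters $\chi>0$, $a>0$ and a real electric potential $\varphi(t,\mathbf x)$, the KG equation is $-c^{-2}\tilde\partial_t^2\psi+\Delta\psi-G_a'(|\psi|^2)\psi-\kappa_0^2\psi=0$, $\tilde\partial_t=\partial_t+\mathrm i q\varphi/\chi$, $\kappa_0=mc/\chi$, with $G_a(s)=a^{-5}G_1(a^3s)$, where $G_1(0)=0$, $G_1'\in C^1((0,\infty))$, $\psi\mapsto G_1'(|\psi|^2)\psi$ extends to a $C^\alpha(\mathbb C)$ function and $\psi\mapsto G_1(|\psi|^2)$ is $C^{1+\alpha}(\mathbb C)$ for every $\alpha\in(0,1)$, with $|G_1(|\psi|^2)|\le C|\psi|^{1+\alpha}$, $|G_1'(|\psi|^2)||\psi|\le C|\psi|^\alpha$ for bounded $|\psi|$. $a_C=\chi/(mc)$. Energy density $\mathcal E=\frac{\chi^2}{2m}[c^{-2}|\tilde\partial_t\psi|^2+|\nabla\psi|^2+G_a(|\psi|^2)+\kappa_0^2|\psi|^2]$. $\nabla_{0,\mathbf x}=(c^{-1}\partial_t,\partial_1,\partial_2,\partial_3)$. Trajectory: $\hat{\mathbf r}\in C^2([T_-,T_+];\mathbb R^3)$ with $|\partial_t\hat{\mathbf r}|,|\partial_t^2\hat{\mathbf r}|\le C$;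 $R_n\to0$; $\Omega_n(t)=\{|\mathbf x-\hat{\mathbf r}(t)|\le R_n\}$, $\hat\Omega_n=\{(t,\mathbf x):t\in[T_-,T_+],\mathbf x\in\Omega_n(t)\}$. Localized KG equations: $a_n\to0$, $\chi_n\to0$, $a_{C,n}/a_n\le C$, $R_n/a_n\to\infty$; $\varphi_n\in C^2(\hat\Omega_n)$ with $\sup_{\hat\Omega_n}(|\varphi_n|+|\nabla_{0,\mathbf x}\varphi_n|)\le C$; a limit $\varphi_\infty(t,\mathbf x)=\varphi_\infty(t,\hat{\mathbf r}(t))+(\mathbf x-\hat{\mathbf r}(t))\cdot\nabla\varphi_\infty(t)$ with $\sup_{\hat\Omega_n}(|\varphi_n-\varphi_\infty|+|\nabla_{0,\mathbf x}(\varphi_n-\varphi_\infty)|)\to0$ and $|\varphi_\infty(t,\hat{\mathbf r}(t))|,|\nabla\varphi_\infty(t)|,|\partial_t\nabla\varphi_\infty(t)|\le C$. Concentrating solutions: $\psi_n\in C^2(\hat\Omega_n)$ solving KG with $(\chi_n,a_n,\varphi_n)$ in $\hat\Omega_n$ such that (i) $\max_t\int_{\Omega_n(t)}[a_C^2|\nabla_{0,\mathbf x}\psi_n|^2+a_C^2|G_a(|\psi_n|^2)|+|\psi_n|^2]d^3x\le C$; (ii) $\max_t\int_{\partial\Omega_n(t)}[\text{same integrand}]d^2\sigma\to0$; (iii) $\bar{\mathcal E}_n(t)=\int_{\Omega_n(t)}\mathcal E_nd^3x\ge c_0>0$ for $n\ge n_0$; (iv) $\bar{\mathcal E}_n(t_0)$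 converges for some $t_0$. Adjacent ergocenter: $\mathbf r_n(t)=\bar{\mathcal E}_n(t)^{-1}\int_{\Omega_n(t)}\mathbf x\,\mathcal E_n\,d^3x$. *)

theory Defs
  imports "HOL-Analysis.Analysis"
begin

type_synonym pt = "real \<times> (real^3)"   (* spacetime point (t, x) *)

definition dd :: "('a::real_normed_vector \<Rightarrow> 'b::real_normed_vector) \<Rightarrow> 'a \<Rightarrow> 'a \<Rightarrow> 'b" where
  "dd F v p = vector_derivative (\<lambda>s. F (p + s *\<^sub>R v)) (at 0)"

definition C2_on :: "'a::euclidean_space set \<Rightarrow> ('a \<Rightarrow> 'b::real_normed_vector) \<Rightarrow> bool" where
  "C2_on U F \<longleftrightarrow> open U \<and> continuous_on U F
     \<and> (\<forall>v\<in>Basis. \<forall>p\<in>U. (\<lambda>s. F (p + s *\<^sub>R v)) differentiable (at 0))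
     \<and> (\<forall>v\<in>Basis. continuous_on U (dd F v))
     \<and> (\<forall>v\<in>Basis. \<forall>w\<in>Basis. \<forall>p\<in>U. (\<lambda>s. dd F v (p + s *\<^sub>R w)) differentiable (at 0))
     \<and> (\<forall>v\<in>Basis. \<forall>w\<in>Basis. continuous_on U (dd (dd F v) w))"

definition C2_set :: "'a::euclidean_space set \<Rightarrow> ('a \<Rightarrow> 'b::real_normed_vector) \<Rightarrow> bool" where
  "C2_set S F \<longleftrightarrow> (\<exists>U. S \<subseteq> U \<and> C2_on U F)"

text \<open>Time derivative, taken within the time interval I (one-sided at the end points).\<close>
definition dt :: "real set \<Rightarrow> (pt \<Rightarrow> 'b::real_normed_vector) \<Rightarrow> pt \<Rightarrow> 'b" where
  "dt I F p = vector_derivative (\<lambda>s. F (s, snd p)) (at (fst p) within I)"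

definition dx :: "3 \<Rightarrow> (pt \<Rightarrow> 'b::real_normed_vector) \<Rightarrow> pt \<Rightarrow> 'b" where
  "dx i F p = vector_derivative (\<lambda>s. F (fst p, snd p + s *\<^sub>R axis i 1)) (at 0)"

definition lap :: "(pt \<Rightarrow> 'b::real_normed_vector) \<Rightarrow> pt \<Rightarrow> 'b" where
  "lap F p = (\<Sum>i\<in>UNIV. dx i (dx i F) p)"

definition grad0_sq :: "real \<Rightarrow> real set \<Rightarrow> (pt \<Rightarrow> 'b::real_normed_vector) \<Rightarrow> pt \<Rightarrow> real" where
  "grad0_sq c I F p = (norm (dt I F p) / c)^2 + (\<Sum>i\<in>UNIV. (norm (dx i F p))^2)"

definition grad0_norm :: "real \<Rightarrow> real set \<Rightarrow> (pt \<Rightarrow> 'b::real_normed_vector) \<Rightarrow> pt \<Rightarrow> real" where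
  "grad0_norm c I F p = sqrt (grad0_sq c I F p)"

definition tD :: "real set \<Rightarrow> real \<Rightarrow> real \<Rightarrow> (pt \<Rightarrow> real) \<Rightarrow> (pt \<Rightarrow> complex) \<Rightarrow> pt \<Rightarrow> complex" where
  "tD I q chi phi F p = dt I F p + \<i> * complex_of_real (q * phi p / chi) * F p"

definition Ga :: "real \<Rightarrow> (real \<Rightarrow> real) \<Rightarrow> real \<Rightarrow> real" where
  "Ga a G1 s = G1 (a^3 * s) / a^5"

definition holder_loc :: "real \<Rightarrow> ('a::real_normed_vector \<Rightarrow> 'b::real_normed_vector) \<Rightarrow> bool" where
  "holder_loc al h \<longleftrightarrow> (\<forall>K. \<exists>L. \<forall>z w. norm z \<le> K \<longrightarrow> norm w \<le> K \<longrightarrow>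
       norm (h z - h w) \<le> L * norm (z - w) powr al)"

definition admissible_G1 :: "(real \<Rightarrow> real) \<Rightarrow> bool" where
  "admissible_G1 G1 \<longleftrightarrow>
     G1 0 = 0
   \<and> (\<forall>s>0. (G1 has_real_derivative deriv G1 s) (at s))
   \<and> (\<forall>s>0. (deriv G1 has_real_derivative deriv (deriv G1) s) (at s))
   \<and> continuous_on {0<..} (deriv (deriv G1))
   \<and> (\<forall>al. 0 < al \<and> al < 1 \<longrightarrow>
        (\<exists>h::complex \<Rightarrow> complex. (\<forall>z. z \<noteq> 0 \<longrightarrow> h z = complex_of_real (deriv G1 ((cmod z)^2)) * z)
                                  \<and> holder_loc al h)
      \<and> (\<exists>D::complex \<Rightarrow> complex \<Rightarrow> real.
           (\<forall>z. ((\<lambda>w. G1 ((cmod w)^2)) has_derivative D z) (at z))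
         \<and> (\<forall>K. \<exists>L. \<forall>z w u. cmod z \<le> K \<longrightarrow> cmod w \<le> K \<longrightarrow>
                 \<bar>D z u - D w u\<bar> \<le> L * cmod (z - w) powr al * cmod u))
      \<and> (\<forall>K. \<exists>L. \<forall>z. cmod z \<le> K \<longrightarrow>
              \<bar>G1 ((cmod z)^2)\<bar> \<le> L * cmod z powr (1 + al)
            \<and> \<bar>deriv G1 ((cmod z)^2)\<bar> * cmod z \<le> L * cmod z powr al))"

definition KG_lhs :: "real \<Rightarrow> real \<Rightarrow> real \<Rightarrow> (real \<Rightarrow> real) \<Rightarrow> real set \<Rightarrow> real \<Rightarrow> real
    \<Rightarrow> (pt \<Rightarrow> real) \<Rightarrow> (pt \<Rightarrow> complex) \<Rightarrow> pt \<Rightarrow> complex" where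
  "KG_lhs c m q G1 I chi a phi psi p =
     - tD I q chi phi (tD I q chi phi psi) p / complex_of_real (c^2)
     + lap psi p
     - complex_of_real (deriv (Ga a G1) ((cmod (psi p))^2)) * psi p
     - complex_of_real ((m * c / chi)^2) * psi p"

definition energy :: "real \<Rightarrow> real \<Rightarrow> real \<Rightarrow> (real \<Rightarrow> real) \<Rightarrow> real set \<Rightarrow> real \<Rightarrow> real
    \<Rightarrow> (pt \<Rightarrow> real) \<Rightarrow> (pt \<Rightarrow> complex) \<Rightarrow> pt \<Rightarrow> real" where
  "energy c m q G1 I chi a phi psi p =
     chi^2 / (2 * m) *
       ((cmod (tD I q chi phi psi p))^2 / c^2
        + (\<Sum>i\<in>UNIV. (cmod (dx i psi p))^2)
        + Ga a G1 ((cmod (psi p))^2)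
        + (m * c / chi)^2 * (cmod (psi p))^2)"

definition sph :: "real \<Rightarrow> real \<Rightarrow> real^3" where
  "sph th ph = vector [sin th * cos ph, sin th * sin ph, cos th]"

definition sphere_integral :: "real^3 \<Rightarrow> real \<Rightarrow> (real^3 \<Rightarrow> real) \<Rightarrow> real" where
  "sphere_integral x0 R f =
     integral ({0..pi} \<times> {0..2*pi}) (\<lambda>(th, ph). R^2 * sin th * f (x0 + R *\<^sub>R sph th ph))"

end

theory Submission
  imports Defs
begin


lemma cont_compact_integrable:
  fixes f :: "'a::euclidean_space \<Rightarrow> 'b::euclidean_space"
  assumes f: "continuous_on S f" and S: "compact S"
  shows "f integrable_on S"
proof -
  have "compact (f ` S)" using compact_continuous_image[OF f S] .
  then have "bounded (f ` S)" by (rule compact_imp_bounded)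
  then obtain B where B0: "\<forall>y\<in>f ` S. norm y \<le> B" unfolding bounded_iff by blast
  have B: "\<forall>x\<in>S. norm (f x) \<le> B" using B0 by simp
  have lm: "S \<in> lmeasurable" using lmeasurable_compact[OF S] .
  have Sl: "S \<in> sets lebesgue" using lm by (rule fmeasurableD)
  have m: "f \<in> borel_measurable (lebesgue_on S)"
    by (rule continuous_imp_measurable_on_sets_lebesgue[OF f Sl])
  have "(\<lambda>x. B) integrable_on S" by (rule integrable_on_const[OF lm])
  then have "f absolutely_integrable_on S"
    using measurable_bounded_by_integrable_imp_absolutely_integrable[OF m Sl, of "\<lambda>x. B"] B by simp
  then show ?thesis by (rule set_lebesgue_integral_eq_integral(1))
qed

lemma G1_cont:
  assumes "admissible_G1 G1"
  shows "continuous_on UNIV (\<lambda>w::complex. G1 ((cmod w)^2))"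
proof -
  note A = assms[unfolded admissible_G1_def, THEN conjunct2, THEN conjunct2, THEN conjunct2, THEN conjunct2]
  have h: "0 < (1/2::real) \<and> (1/2::real) < 1" by simp
  note B = mp[OF spec[OF A, of "1/2"] h, THEN conjunct2, THEN conjunct1]
  from B obtain D where D: "\<forall>z. ((\<lambda>w. G1 ((cmod w)^2)) has_derivative D z) (at z)"
    by (elim exE conjE)
  have "\<forall>z. isCont (\<lambda>w. G1 ((cmod w)^2)) z"
  proof
    fix z show "isCont (\<lambda>w. G1 ((cmod w)^2)) z"
      using has_derivative_continuous[OF spec[OF D, of z]] .
  qed
  then show ?thesis by (simp add: continuous_on_eq_continuous_at)
qed

lemma Ga_cont:
  assumes "admissible_G1 G1" "a > 0" "continuous_on K h"
  shows "continuous_on K (\<lambda>x. Ga a G1 ((cmod (h x))^2))"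
proof -
  have eq: "Ga a G1 ((cmod (h x))^2) = G1 ((cmod (complex_of_real (sqrt (a^3)) * h x))^2) / a^5" for x
    using assms(2) by (simp add: Ga_def norm_mult power_mult_distrib)
  have "continuous_on K (\<lambda>x. G1 ((cmod (complex_of_real (sqrt (a^3)) * h x))^2))"
  proof (rule continuous_on_compose2[OF G1_cont[OF assms(1)]])
    show "continuous_on K (\<lambda>x. complex_of_real (sqrt (a^3)) * h x)"
      by (intro continuous_on_mult continuous_on_const assms(3))
  qed auto
  then show ?thesis unfolding eq using assms(2) by (intro continuous_on_divide continuous_on_const) auto
qed

lemma dx_dd: "dx i F p = dd F (0, axis i 1) p"
  unfolding dx_def dd_def by (cases p) (simp add: scaleR_prod_def)

lemma C2_slice:
  fixes F :: "pt \<Rightarrow> 'b::real_normed_vector"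
  assumes C2: "C2_set S F" and T: "Tm < Tp" "t \<in> {Tm..Tp}" and KS: "\<forall>x\<in>K. (t, x) \<in> S"
  shows "continuous_on K (\<lambda>x. F (t,x))" "continuous_on K (\<lambda>x. dt {Tm..Tp} F (t,x))"
    "continuous_on K (\<lambda>x. dx i F (t,x))"
proof -
  obtain U where U: "S \<subseteq> U" "C2_on U F" using C2 unfolding C2_set_def by blast
  note U2 = U(2)[unfolded C2_on_def]
  have cU: "continuous_on U F" using U2[THEN conjunct2, THEN conjunct1] .
  have dU: "\<forall>v\<in>Basis. \<forall>p\<in>U. (\<lambda>s. F (p + s *\<^sub>R v)) differentiable (at 0)"
    using U2[THEN conjunct2, THEN conjunct2, THEN conjunct1] .
  have ccU: "\<forall>v\<in>Basis. continuous_on U (dd F v)"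
    using U2[THEN conjunct2, THEN conjunct2, THEN conjunct2, THEN conjunct1] .
  have img: "(\<lambda>x. (t, x)) ` K \<subseteq> U" using KS U(1) by auto
  have pc: "continuous_on K (\<lambda>x. (t, x))" by (auto intro!: continuous_intros)
  show "continuous_on K (\<lambda>x. F (t,x))"
    using continuous_on_compose2[OF cU pc img] .
  have bi: "(0::real, axis i (1::real)) \<in> (Basis::pt set)" by (simp add: Basis_prod_def axis_in_Basis_iff)
  have "continuous_on U (dd F (0, axis i 1))" using bspec[OF ccU bi] .
  then show "continuous_on K (\<lambda>x. dx i F (t,x))"
    unfolding dx_dd by (rule continuous_on_compose2[OF _ pc img])
  have b1: "(1::real, 0::real^3) \<in> (Basis::pt set)" by (simp add: Basis_prod_def)
  have eq: "dt {Tm..Tp} F (t,x) = dd F (1,0) (t,x)" if x: "x \<in> K" for x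
  proof -
    let ?g = "\<lambda>s. F ((t,x) + s *\<^sub>R (1::real, 0::real^3))"
    have tU: "(t,x) \<in> U" using img x by auto
    have "?g differentiable (at 0)" by (rule bspec[OF bspec[OF dU b1] tU])
    then have gd: "(?g has_vector_derivative dd F (1,0) (t,x)) (at 0)"
      unfolding dd_def vector_derivative_works .
    have sd: "((\<lambda>s. s - t) has_vector_derivative 1) (at t)"
      using has_vector_derivative_diff[OF has_vector_derivative_id has_vector_derivative_const[of t]] by simp
    have gd': "(?g has_vector_derivative dd F (1,0) (t,x)) (at ((\<lambda>s. s - t) t))"
      using gd by simp
    have ch: "((?g \<circ> (\<lambda>s. s - t)) has_vector_derivative (1 *\<^sub>R dd F (1,0) (t,x))) (at t)"
      by (rule vector_diff_chain_at[OF sd gd'])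
    have pe: "(t, x) + (s - t) *\<^sub>R (1::real, 0::real^3) = (s, x)" for s
      by (simp add: prod_eq_iff)
    have ceq: "?g \<circ> (\<lambda>s. s - t) = (\<lambda>s. F (s, x))"
      by (rule ext) (simp only: o_def pe)
    have hd: "((\<lambda>s. F (s, x)) has_vector_derivative dd F (1,0) (t,x)) (at t)"
      using ch unfolding ceq by simp
    have hv: "((\<lambda>s. F (s, x)) has_vector_derivative dd F (1,0) (t,x)) (at t within cbox Tm Tp)"
      by (rule has_vector_derivative_at_within[OF hd])
    have tc: "t \<in> cbox Tm Tp" using T(2) by simp
    have "vector_derivative (\<lambda>s. F (s, x)) (at t within cbox Tm Tp) = dd F (1,0) (t,x)"
      by (rule vector_derivative_within_cbox[OF T(1) tc hv])
    then show ?thesis unfolding dt_def by simp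
  qed
  have "continuous_on U (dd F (1,0))" using bspec[OF ccU b1] .
  then have "continuous_on K (\<lambda>x. dd F (1,0) (t,x))"
    by (rule continuous_on_compose2[OF _ pc img])
  then show "continuous_on K (\<lambda>x. dt {Tm..Tp} F (t,x))"
    by (rule continuous_on_eq) (use eq in auto)
qed



lemma energy_bound_alg:
  fixes chi m c q ph x y w S G C :: real
  assumes chi: "chi > 0" and m: "m > 0" and c: "c > 0" and ph: "\<bar>ph\<bar> \<le> C"
    and x0: "0 \<le> x" and xy: "x \<le> y + \<bar>q*ph/chi\<bar> * w" and y0: "0 \<le> y" and w0: "0 \<le> w" and S0: "0 \<le> S"
  shows "\<bar>chi^2/(2*m) * (x^2/c^2 + S + G + (m*c/chi)^2 * w^2)\<bar>
    \<le> (m*c^2/2*(3 + 2*q^2*C^2/(m^2*c^4))) * ((chi/(m*c))^2*((y/c)^2 + S) + (chi/(m*c))^2*\<bar>G\<bar> + w^2)"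
proof -
  define b where "b = \<bar>q*ph/chi\<bar>"
  define A where "A = (chi/(m*c))^2"
  define Q where "Q = q^2*C^2/(m^2*c^4)"
  have b0: "b \<ge> 0" unfolding b_def by simp
  have A0: "A \<ge> 0" unfolding A_def by simp
  have Q0: "Q \<ge> 0" unfolding Q_def using m c by simp
  have "x^2 \<le> (y + b*w)^2" using xy x0 unfolding b_def by (intro power_mono) auto
  also have "\<dots> \<le> 2*y^2 + 2*(b^2*w^2)"
  proof -
    have d: "0 \<le> (y - b*w)^2" by simp
    have "(y+b*w)^2 = 2*y^2+2*(b^2*w^2) - (y-b*w)^2" by (simp add: power2_eq_square algebra_simps)
    then show ?thesis using d by linarith
  qed
  finally have x2: "x^2 \<le> 2*y^2 + 2*(b^2*w^2)" .
  have e1: "chi^2/(2*m) = (m*c^2/2) * A" unfolding A_def using m c chi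
    by (simp add: field_simps power2_eq_square)
  have e2: "A * (m*c/chi)^2 = 1" unfolding A_def using m c chi
    by (simp add: field_simps power2_eq_square)
  have Ab: "A * b^2 / c^2 = q^2*ph^2/(m^2*c^4)" unfolding A_def b_def using m c chi
    by (simp add: field_simps power2_eq_square power_mult_distrib eval_nat_numeral)
  have "\<bar>ph\<bar> \<le> \<bar>C\<bar>" using ph by linarith
  then have ph2: "ph^2 \<le> C^2" by (rule abs_le_square_iff[THEN iffD1])
  have AbQ: "A * b^2 / c^2 \<le> Q" unfolding Ab Q_def using m c ph2
    by (intro divide_right_mono mult_left_mono) auto
  have lhs: "chi^2/(2*m) * (x^2/c^2 + S + G + (m*c/chi)^2 * w^2)
      = (m*c^2/2) * (A*x^2/c^2 + A*S + A*G + w^2)"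
    unfolding e1 using e2 by (simp add: algebra_simps)
  have abs1: "\<bar>A*x^2/c^2 + A*S + A*G + w^2\<bar> \<le> A*x^2/c^2 + A*S + A*\<bar>G\<bar> + w^2"
  proof (rule abs_leI)
    have g1: "A*G \<le> A*\<bar>G\<bar>" using A0 by (intro mult_left_mono) auto
    have g2: "-(A*G) \<le> A*\<bar>G\<bar>" using mult_left_mono[of "-G" "\<bar>G\<bar>" A] A0 by simp
    have n1: "0 \<le> A*x^2/c^2" "0 \<le> A*S" "0 \<le> w^2" using A0 S0 by auto
    show "A*x^2/c^2 + A*S + A*G + w^2 \<le> A*x^2/c^2 + A*S + A*\<bar>G\<bar> + w^2" using g1 by linarith
    show "-(A*x^2/c^2 + A*S + A*G + w^2) \<le> A*x^2/c^2 + A*S + A*\<bar>G\<bar> + w^2" using g2 n1 by linarith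
  qed
  have ax1: "A*x^2/c^2 \<le> A*(2*y^2 + 2*(b^2*w^2))/c^2"
    using x2 A0 by (intro divide_right_mono mult_left_mono) auto
  have ax2: "A*(2*y^2 + 2*(b^2*w^2))/c^2 = 2*A*(y/c)^2 + 2*((A*b^2/c^2)*w^2)"
    using c by (simp add: field_simps power_divide)
  have ax3: "(A*b^2/c^2)*w^2 \<le> Q*w^2"
    using mult_right_mono[OF AbQ, of "w^2"] by simp
  have fin: "2*A*(y/c)^2 + 2*(Q*w^2) + A*S + A*\<bar>G\<bar> + w^2 \<le> (3 + 2*Q) * (A*((y/c)^2 + S) + A*\<bar>G\<bar> + w^2)"
  proof -
    have "0 \<le> A*(y/c)^2" "0 \<le> A*S" "0 \<le> A*\<bar>G\<bar>" "0 \<le> Q*(A*(y/c)^2)" "0 \<le> Q*(A*S)" "0 \<le> Q*(A*\<bar>G\<bar>)"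
      using A0 S0 Q0 by auto
    then show ?thesis by (simp add: algebra_simps)
  qed
  have br: "\<bar>A*x^2/c^2 + A*S + A*G + w^2\<bar> \<le> (3 + 2*Q) * (A*((y/c)^2 + S) + A*\<bar>G\<bar> + w^2)"
    using abs1 ax1 ax2 ax3 fin by linarith
  have "\<bar>chi^2/(2*m) * (x^2/c^2 + S + G + (m*c/chi)^2 * w^2)\<bar>
      = (m*c^2/2) * \<bar>A*x^2/c^2 + A*S + A*G + w^2\<bar>"
    unfolding lhs using m c by (simp add: abs_mult)
  also have "\<dots> \<le> (m*c^2/2) * ((3 + 2*Q) * (A*((y/c)^2 + S) + A*\<bar>G\<bar> + w^2))"
    using br m c by (intro mult_left_mono) auto
  finally show ?thesis by (simp only: A_def Q_def mult.assoc times_divide_eq_right)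
qed

theorem lemma2:
  fixes c m q C :: real
    and G1 :: "real \<Rightarrow> real"
    and Tm Tp :: real
    and rhat :: "real \<Rightarrow> real^3"
    and R a chi :: "nat \<Rightarrow> real"
    and phi :: "nat \<Rightarrow> pt \<Rightarrow> real"
    and f0 :: "real \<Rightarrow> real" and g :: "real \<Rightarrow> real^3"
    and psi :: "nat \<Rightarrow> pt \<Rightarrow> complex"
    and c0 t0 :: real and n0 :: nat
  defines "I \<equiv> {Tm..Tp}"
    and "Om \<equiv> (\<lambda>n t. cball (rhat t) (R n))"
    and "OmH \<equiv> (\<lambda>n. {(t, x). t \<in> {Tm..Tp} \<and> x \<in> cball (rhat t) (R n)})"
    and "phi_inf \<equiv> (\<lambda>p::pt. f0 (fst p) + (snd p - rhat (fst p)) \<bullet> g (fst p))"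
    and "aC \<equiv> (\<lambda>n. chi n / (m * c))"
    and "E \<equiv> (\<lambda>n. energy c m q G1 {Tm..Tp} (chi n) (a n) (phi n) (psi n))"
    and "Ebar \<equiv> (\<lambda>n t. integral (cball (rhat t) (R n)) (\<lambda>x. energy c m q G1 {Tm..Tp} (chi n) (a n) (phi n) (psi n) (t, x)))"
    and "dens \<equiv> (\<lambda>n p. (chi n / (m * c))^2 * grad0_sq c {Tm..Tp} (psi n) p
                        + (chi n / (m * c))^2 * \<bar>Ga (a n) G1 ((cmod (psi n p))^2)\<bar>
                        + (cmod (psi n p))^2)"
  assumes c_pos: "c > 0" and m_pos: "m > 0"
    and G1_adm: "admissible_G1 G1"
    and T_lt: "Tm < Tp"
    (* trajectory *)
    and rhat_C2: "\<exists>r1 r2. (\<forall>t\<in>I. (rhat has_vector_derivative r1 t) (at t within I)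
                            \<and> (r1 has_vector_derivative r2 t) (at t within I))
                         \<and> continuous_on I r2
                         \<and> (\<forall>t\<in>I. norm (r1 t) \<le> C \<and> norm (r2 t) \<le> C)"
    and R_pos: "\<forall>n. R n > 0" and R_lim: "R \<longlonglongrightarrow> 0"
    (* localized KG equations *)
    and a_pos: "\<forall>n. a n > 0" and a_lim: "a \<longlonglongrightarrow> 0"
    and chi_pos: "\<forall>n. chi n > 0" and chi_lim: "chi \<longlonglongrightarrow> 0"
    and aC_a: "\<forall>n. aC n / a n \<le> C"
    and R_a: "filterlim (\<lambda>n. R n / a n) at_top sequentially"
    and phi_C2: "\<forall>n. C2_set (OmH n) (phi n)"
    and phi_bd: "\<forall>n. \<forall>p\<in>OmH n. \<bar>phi n p\<bar> + grad0_norm c I (phi n) p \<le> C"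
    and f0_diff: "\<forall>t\<in>I. f0 differentiable (at t within I)"
    and g_diff: "\<forall>t\<in>I. g differentiable (at t within I)"
    and phi_inf_bd: "\<forall>t\<in>I. \<bar>f0 t\<bar> \<le> C \<and> norm (g t) \<le> C
                       \<and> norm (vector_derivative g (at t within I)) \<le> C"
    and phi_conv: "\<forall>\<epsilon>>0. \<forall>\<^sub>F n in sequentially. \<forall>p\<in>OmH n.
                      \<bar>phi n p - phi_inf p\<bar> + grad0_norm c I (\<lambda>p. phi n p - phi_inf p) p \<le> \<epsilon>"
    (* concentrating solutions *)
    and psi_C2: "\<forall>n. C2_set (OmH n) (psi n)"
    and psi_KG: "\<forall>n. \<forall>p\<in>OmH n. KG_lhs c m q G1 I (chi n) (a n) (phi n) (psi n) p = 0"
    and cond_i: "\<forall>n. \<forall>t\<in>I. integral (Om n t) (\<lambda>x. dens n (t, x)) \<le> C"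
    and cond_ii: "\<forall>\<epsilon>>0. \<forall>\<^sub>F n in sequentially. \<forall>t\<in>I.
                     sphere_integral (rhat t) (R n) (\<lambda>x. dens n (t, x)) \<le> \<epsilon>"
    and c0_pos: "c0 > 0"
    and cond_iii: "\<forall>n\<ge>n0. \<forall>t\<in>I. Ebar n t \<ge> c0"
    and t0_in: "t0 \<in> I" and cond_iv: "convergent (\<lambda>n. Ebar n t0)"
  shows "uniform_limit I
           (\<lambda>n t. (1 / Ebar n t) *\<^sub>R integral (Om n t) (\<lambda>x. E n (t, x) *\<^sub>R x))
           rhat sequentially"
proof -
  have Ieq: "I = {Tm..Tp}" by (simp add: I_def)
  define K where "K = m*c^2/2*(3 + 2*q^2*C^2/(m^2*c^4))"
  have K0: "0 \<le> K" unfolding K_def using m_pos c_pos by (simp add: add_nonneg_nonneg)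
  have KS: "\<forall>x\<in>cball (rhat t) (R n). (t, x) \<in> OmH n" if t: "t \<in> I" for n t
    using t by (simp add: OmH_def I_def)
  have tI: "t \<in> {Tm..Tp}" if "t \<in> I" for t using that Ieq by simp
  have pw: "\<bar>E n (t,x)\<bar> \<le> K * dens n (t,x) \<and> 0 \<le> dens n (t,x)"
    if t: "t \<in> I" and x: "x \<in> cball (rhat t) (R n)" for n t x
  proof -
    let ?p = "(t,x)"
    have pO: "?p \<in> OmH n" using KS[OF t] x by blast
    have gs: "0 \<le> grad0_sq c I (phi n) ?p" unfolding grad0_sq_def by (simp add: sum_nonneg)
    have "\<bar>phi n ?p\<bar> + grad0_norm c I (phi n) ?p \<le> C" using phi_bd pO by blast
    moreover have "0 \<le> grad0_norm c I (phi n) ?p" unfolding grad0_norm_def using gs by simp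
    ultimately have ph: "\<bar>phi n ?p\<bar> \<le> C" by linarith
    have xy: "cmod (tD {Tm..Tp} q (chi n) (phi n) (psi n) ?p)
        \<le> cmod (dt {Tm..Tp} (psi n) ?p) + \<bar>q * phi n ?p / chi n\<bar> * cmod (psi n ?p)"
    proof -
      let ?d = "dt {Tm..Tp} (psi n) ?p" and ?z = "psi n ?p" and ?r = "q * phi n ?p / chi n"
      have "tD {Tm..Tp} q (chi n) (phi n) (psi n) ?p = ?d + \<i> * complex_of_real ?r * ?z"
        by (simp add: tD_def)
      moreover have "cmod (\<i> * complex_of_real ?r * ?z) = \<bar>?r\<bar> * cmod ?z"
        by (simp only: norm_mult norm_ii norm_of_real mult_1)
      ultimately show ?thesis using norm_triangle_ineq[of ?d "\<i> * complex_of_real ?r * ?z"] by simp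
    qed
    have chn: "chi n > 0" using chi_pos by blast
    have al: "\<bar>chi n^2/(2*m) * ((cmod (tD {Tm..Tp} q (chi n) (phi n) (psi n) ?p))^2/c^2
          + (\<Sum>i\<in>UNIV. (cmod (dx i (psi n) ?p))^2) + Ga (a n) G1 ((cmod (psi n ?p))^2)
          + (m*c/chi n)^2 * (cmod (psi n ?p))^2)\<bar>
       \<le> (m*c^2/2*(3 + 2*q^2*C^2/(m^2*c^4))) * ((chi n/(m*c))^2*((cmod (dt {Tm..Tp} (psi n) ?p)/c)^2
          + (\<Sum>i\<in>UNIV. (cmod (dx i (psi n) ?p))^2)) + (chi n/(m*c))^2*\<bar>Ga (a n) G1 ((cmod (psi n ?p))^2)\<bar>
          + (cmod (psi n ?p))^2)"
      by (rule energy_bound_alg[OF chn m_pos c_pos ph norm_ge_zero xy norm_ge_zero norm_ge_zero])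
         (simp add: sum_nonneg)
    have e1: "E n ?p = chi n^2/(2*m) * ((cmod (tD {Tm..Tp} q (chi n) (phi n) (psi n) ?p))^2/c^2
          + (\<Sum>i\<in>UNIV. (cmod (dx i (psi n) ?p))^2) + Ga (a n) G1 ((cmod (psi n ?p))^2)
          + (m*c/chi n)^2 * (cmod (psi n ?p))^2)"
      by (simp add: E_def energy_def)
    have d1: "dens n ?p = (chi n/(m*c))^2*((cmod (dt {Tm..Tp} (psi n) ?p)/c)^2
          + (\<Sum>i\<in>UNIV. (cmod (dx i (psi n) ?p))^2)) + (chi n/(m*c))^2*\<bar>Ga (a n) G1 ((cmod (psi n ?p))^2)\<bar>
          + (cmod (psi n ?p))^2"
      by (simp add: dens_def grad0_sq_def)
    have "0 \<le> dens n ?p" unfolding d1 by (simp add: sum_nonneg)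
    then show ?thesis using al unfolding e1 d1 K_def by simp
  qed
  have cont: "continuous_on (cball (rhat t) (R n)) (\<lambda>x. E n (t,x))
            \<and> continuous_on (cball (rhat t) (R n)) (\<lambda>x. dens n (t,x))" if t: "t \<in> I" for n t
  proof -
    let ?B = "cball (rhat t) (R n)"
    have C2p: "C2_set (OmH n) (psi n)" using psi_C2 by blast
    have C2f: "C2_set (OmH n) (phi n)" using phi_C2 by blast
    note ps = C2_slice[OF C2p T_lt tI[OF t] KS[OF t]]
    note ph = C2_slice[OF C2f T_lt tI[OF t] KS[OF t]]
    have an: "a n > 0" using a_pos by blast
    have chn: "chi n > 0" using chi_pos by blast
    note cG = Ga_cont[OF G1_adm an ps(1)]
    have cdx: "\<And>i. continuous_on ?B (\<lambda>x. dx i (psi n) (t,x))" by (rule ps(3))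
    have "continuous_on ?B (\<lambda>x. E n (t,x))"
      unfolding E_def energy_def tD_def
      apply (intro continuous_intros ps(1) ps(2) cdx ph(1) cG)
      using c_pos m_pos chn by auto
    moreover have "continuous_on ?B (\<lambda>x. dens n (t,x))"
      unfolding dens_def grad0_sq_def
      apply (intro continuous_intros ps(1) ps(2) cdx cG)
      using c_pos m_pos chn by auto
    ultimately show ?thesis by blast
  qed
  have main: "norm ((1 / Ebar n t) *\<^sub>R integral (Om n t) (\<lambda>x. E n (t, x) *\<^sub>R x) - rhat t) \<le> R n * (K * C) / c0"
    if n: "n \<ge> n0" and t: "t \<in> I" for n t
  proof -
    let ?B = "cball (rhat t) (R n)"
    let ?f = "\<lambda>x. E n (t,x)"
    let ?r = "rhat t"
    have cE: "continuous_on ?B ?f" and cD: "continuous_on ?B (\<lambda>x. dens n (t,x))" using cont[OF t] by auto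
    have cB: "compact ?B" by simp
    have intE: "?f integrable_on ?B" by (rule cont_compact_integrable[OF cE cB])
    have intEx: "(\<lambda>x. ?f x *\<^sub>R x) integrable_on ?B"
      by (rule cont_compact_integrable[OF _ cB]) (intro continuous_intros cE)
    have intEr: "(\<lambda>x. ?f x *\<^sub>R (x - ?r)) integrable_on ?B"
      by (rule cont_compact_integrable[OF _ cB]) (intro continuous_intros cE)
    have intD: "(\<lambda>x. dens n (t,x)) integrable_on ?B" by (rule cont_compact_integrable[OF cD cB])
    have intD2: "(\<lambda>x. (R n * K) *\<^sub>R dens n (t,x)) integrable_on ?B"
      by (rule cont_compact_integrable[OF _ cB]) (intro continuous_intros cD)
    have Ebe: "Ebar n t = integral ?B ?f" by (simp add: Ebar_def E_def)
    have Ebc: "Ebar n t \<ge> c0" using cond_iii n t by blast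
    have Ebp: "Ebar n t > 0" using Ebc c0_pos by linarith
    have Omeq: "Om n t = ?B" by (simp add: Om_def)
    have sc: "integral ?B (\<lambda>x. ?f x *\<^sub>R ?r) = integral ?B ?f *\<^sub>R ?r"
      by (rule integral_unique[OF has_integral_scaleR_left[OF integrable_integral[OF intE]]])
    have "(\<lambda>x. ?f x *\<^sub>R (x - ?r)) = (\<lambda>x. ?f x *\<^sub>R x - ?f x *\<^sub>R ?r)"
      by (simp add: scaleR_diff_right)
    then have split: "integral ?B (\<lambda>x. ?f x *\<^sub>R (x - ?r)) = integral ?B (\<lambda>x. ?f x *\<^sub>R x) - Ebar n t *\<^sub>R ?r"
      using integral_diff[OF intEx integrable_on_scaleR_left[OF intE]] sc Ebe by simp
    have Rn: "R n > 0" using R_pos by blast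
    have bnd: "norm (integral ?B (\<lambda>x. ?f x *\<^sub>R (x - ?r))) \<le> integral ?B (\<lambda>x. (R n * K) *\<^sub>R dens n (t,x))"
    proof (rule integral_norm_bound_integral[OF intEr intD2])
      fix x assume x: "x \<in> ?B"
      have p: "\<bar>?f x\<bar> \<le> K * dens n (t,x)" "0 \<le> dens n (t,x)" using pw[OF t x] by auto
      have dx: "norm (x - ?r) \<le> R n" using x by (simp add: dist_norm norm_minus_commute)
      have "norm (?f x *\<^sub>R (x - ?r)) = \<bar>?f x\<bar> * norm (x - ?r)" by simp
      also have "\<dots> \<le> (K * dens n (t,x)) * R n"
        using p dx by (intro mult_mono) auto
      finally show "norm (?f x *\<^sub>R (x - ?r)) \<le> (R n * K) *\<^sub>R dens n (t,x)" by (simp add: algebra_simps)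
    qed
    have iD: "integral ?B (\<lambda>x. dens n (t,x)) \<le> C" using cond_i t Om_def by simp
    have "integral ?B (\<lambda>x. (R n * K) *\<^sub>R dens n (t,x)) = (R n * K) * integral ?B (\<lambda>x. dens n (t,x))"
      by simp
    also have "\<dots> \<le> (R n * K) * C" using iD Rn K0 by (intro mult_left_mono) auto
    finally have bnd2: "norm (integral ?B (\<lambda>x. ?f x *\<^sub>R (x - ?r))) \<le> R n * (K * C)"
      using bnd by (simp add: mult.assoc)
    have iD0: "0 \<le> integral ?B (\<lambda>x. dens n (t,x))"
      by (rule integral_nonneg[OF intD]) (use pw[OF t] in blast)
    have RKC: "0 \<le> R n * (K * C)" using Rn K0 iD0 iD by simp
    have eq: "(1 / Ebar n t) *\<^sub>R integral (Om n t) (\<lambda>x. E n (t, x) *\<^sub>R x) - rhat t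
        = (1 / Ebar n t) *\<^sub>R integral ?B (\<lambda>x. ?f x *\<^sub>R (x - ?r))"
      unfolding split Omeq using Ebp by (simp add: scaleR_diff_right)
    have "norm ((1 / Ebar n t) *\<^sub>R integral ?B (\<lambda>x. ?f x *\<^sub>R (x - ?r)))
        = norm (integral ?B (\<lambda>x. ?f x *\<^sub>R (x - ?r))) / Ebar n t" using Ebp by simp
    also have "\<dots> \<le> R n * (K * C) / c0"
      by (rule frac_le[OF RKC bnd2 c0_pos Ebc])
    finally show ?thesis unfolding eq .
  qed
  show ?thesis unfolding uniform_limit_iff
  proof (intro allI impI)
    fix e :: real assume e: "e > 0"
    define M where "M = (\<bar>K * C\<bar> + 1) / c0"
    have M0: "M > 0" unfolding M_def using c0_pos by simp
    have ev1: "\<forall>\<^sub>F n in sequentially. R n < e / M"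
      using order_tendstoD(2)[OF R_lim] e M0 by simp
    have ev2: "\<forall>\<^sub>F n in sequentially. n \<ge> n0" by (rule eventually_ge_at_top)
    show "\<forall>\<^sub>F n in sequentially. \<forall>x\<in>I. dist ((1 / Ebar n x) *\<^sub>R integral (Om n x) (\<lambda>y. E n (x, y) *\<^sub>R y)) (rhat x) < e"
      using eventually_conj[OF ev1 ev2]
    proof (rule eventually_mono)
      fix n assume nn: "R n < e / M \<and> n \<ge> n0"
      have Rn: "R n > 0" using R_pos by blast
      show "\<forall>x\<in>I. dist ((1 / Ebar n x) *\<^sub>R integral (Om n x) (\<lambda>y. E n (x, y) *\<^sub>R y)) (rhat x) < e"
      proof
        fix x assume x: "x \<in> I"
        have "dist ((1 / Ebar n x) *\<^sub>R integral (Om n x) (\<lambda>y. E n (x, y) *\<^sub>R y)) (rhat x)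
            \<le> R n * (K * C) / c0" unfolding dist_norm using main[OF _ x] nn by blast
        also have "\<dots> \<le> R n * M"
        proof -
          have "K * C \<le> \<bar>K * C\<bar> + 1" by linarith
          then have "R n * (K * C) \<le> R n * (\<bar>K * C\<bar> + 1)" using Rn by (intro mult_left_mono) auto
          then show ?thesis unfolding M_def using c0_pos by (simp add: divide_right_mono)
        qed
        also have "\<dots> < e / M * M" using nn M0 by (intro mult_strict_right_mono) auto
        also have "\<dots> = e" using M0 by simp
        finally show "dist ((1 / Ebar n x) *\<^sub>R integral (Om n x) (\<lambda>y. E n (x, y) *\<^sub>R y)) (rhat x) < e" .
      qed
    qed
  qed
qed

end
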